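(* Let $K$ be a field of characteristic zero, let $d\geq 2$, and let $K\langle X_d\rangle=K\langle x_1,\ldots,x_d\rangle$ be the free associative unital algebra of rank $d$ over $K$. Let $C_d$ be the cyclic group of order $d$ generated by the linear map $\rho$ with $\rho(x_1)=x_2,\ \rho(x_2)=x_3,\ \ldots,\ \rho(x_{d-1})=x_d,\ \rho(x_d)=x_1$, acting on $K\langle X_d\rangle$ by algebra automorphisms, and let $K\langle X_d\rangle^{C_d}=\{f\in K\langle X_d\rangle : \rho(f)=f\}$ be the algebra of invariants. Then: (i) The Hilbert series of $K\langle X_d\rangle^{C_d}$ is \[ H\big(K\langle X_d\rangle^{C_d},t\big)=\frac{1-(d-1)t}{1-dt}, \] and $\dim\big((K\langle X_d\rangle^{C_d})^{(n)}\big)=d^{n-1}$ for all $n\geq 1$. (ii) The generating function of a set of homogeneous free generators of the (free) algebra $K\langle X_d\rangle^{C_d}$ is \[ g(t)=\frac{t}{1-(d-1)t}, \] i.e. for each $n\geq 1$ a system of homogeneous free generators has exactly $(d-1)^{n-1}$ elements of degree $n$.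
   Context: $K\langle X_d\rangle$ is graded by total degree in $x_1,\ldots,x_d$; $(K\langle X_d\rangle^{C_d})^{(n)}$ denotes the homogeneous component of degree $n$ of the invariant algebra. The Hilbert series of a graded subalgebra $A$ is $H(A,t)=\sum_{n\geq 0}\dim A^{(n)}t^n$. The algebra of invariants $K\langle X_d\rangle^{C_d}$ is a free associative algebra (on a set of homogeneous generators), and the generating function of a set $Z$ of homogeneous free generators is $\sum_{n\geq1}|Z_n|t^n$ where $Z_n$ is the set of generators of degree $n$. *)

theory Defs
  imports Main "HOL-Library.Function_Algebras" "HOL-Computational_Algebra.Formal_Power_Series"
begin

text \<open>The free associative unital algebra K<x_0,...,x_(d-1)> is modelled as the set of
  finitely supported functions from words (lists of letter indices < d) to K;
  the letter i stands for the variable x_(i+1).\<close>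

definition fa_scale :: "'k::field \<Rightarrow> (nat list \<Rightarrow> 'k) \<Rightarrow> (nat list \<Rightarrow> 'k)" where
  "fa_scale c f = (\<lambda>w. c * f w)"

definition free_alg :: "nat \<Rightarrow> (nat list \<Rightarrow> 'k::field) set" where
  "free_alg d = {f. finite {w. f w \<noteq> 0} \<and> (\<forall>w. f w \<noteq> 0 \<longrightarrow> set w \<subseteq> {..<d})}"

definition fa_one :: "nat list \<Rightarrow> 'k::field" where
  "fa_one w = (if w = [] then 1 else 0)"

definition fa_mult :: "(nat list \<Rightarrow> 'k::field) \<Rightarrow> (nat list \<Rightarrow> 'k) \<Rightarrow> (nat list \<Rightarrow> 'k)" where
  "fa_mult f g = (\<lambda>w. \<Sum>i\<le>length w. f (take i w) * g (drop i w))"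

text \<open>The automorphism rho: x_i \<mapsto> x_(i+1) (indices mod d). It maps the monomial w to
  the monomial  map (\<lambda>i. (i+1) mod d) w, so the coefficient of w in rho(f) is the
  coefficient of  map (\<lambda>i. (i + d - 1) mod d) w  in f.\<close>

definition fa_rho :: "nat \<Rightarrow> (nat list \<Rightarrow> 'k::field) \<Rightarrow> (nat list \<Rightarrow> 'k)" where
  "fa_rho d f = (\<lambda>w. if set w \<subseteq> {..<d} then f (map (\<lambda>i. (i + d - 1) mod d) w) else 0)"

definition invariants :: "nat \<Rightarrow> (nat list \<Rightarrow> 'k::field) set" where
  "invariants d = {f \<in> free_alg d. fa_rho d f = f}"

definition homogeneous :: "nat \<Rightarrow> (nat list \<Rightarrow> 'k::field) \<Rightarrow> bool" where
  "homogeneous n f \<longleftrightarrow> (\<forall>w. f w \<noteq> 0 \<longrightarrow> length w = n)"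

definition inv_component :: "nat \<Rightarrow> nat \<Rightarrow> (nat list \<Rightarrow> 'k::field) set" where
  "inv_component d n = {f \<in> invariants d. homogeneous n f}"

definition inv_dim :: "'k::field itself \<Rightarrow> nat \<Rightarrow> nat \<Rightarrow> nat" where
  "inv_dim _ d n = vector_space.dim (fa_scale :: 'k \<Rightarrow> _) (inv_component d n :: (nat list \<Rightarrow> 'k) set)"

definition hilbert_series :: "'k::field itself \<Rightarrow> nat \<Rightarrow> rat fps" where
  "hilbert_series K d = Abs_fps (\<lambda>n. of_nat (inv_dim K d n))"

definition fa_prod :: "(nat list \<Rightarrow> 'k::field) list \<Rightarrow> (nat list \<Rightarrow> 'k)" where
  "fa_prod zs = foldr fa_mult zs fa_one"

definition free_homog_generators :: "nat \<Rightarrow> (nat list \<Rightarrow> 'k::field) set \<Rightarrow> bool" where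
  "free_homog_generators d Z \<longleftrightarrow>
     Z \<subseteq> invariants d \<and>
     (\<forall>z\<in>Z. \<exists>n\<ge>1. homogeneous n z \<and> z \<noteq> (\<lambda>_. 0)) \<and>
     inj_on fa_prod (lists Z) \<and>
     \<not> module.dependent (fa_scale :: 'k \<Rightarrow> _) (fa_prod ` lists Z) \<and>
     module.span (fa_scale :: 'k \<Rightarrow> _) (fa_prod ` lists Z) = invariants d"

end

theory Submission
  imports Defs "HOL-Library.List_Lexorder"
begin

interpretation FA: vector_space "fa_scale :: 'k::field \<Rightarrow> (nat list \<Rightarrow> 'k) \<Rightarrow> _"
  by unfold_locales (auto simp: fa_scale_def fun_eq_iff algebra_simps)

lemma fun_sum_apply: "(sum f S) x = (\<Sum>i\<in>S. f i x)"
  by (induction S rule: infinite_finite_induct) auto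

definition alph :: "nat \<Rightarrow> nat list \<Rightarrow> bool" where "alph d w \<longleftrightarrow> set w \<subseteq> {..<d}"
definition sh :: "nat \<Rightarrow> nat \<Rightarrow> nat list \<Rightarrow> nat list" where
  "sh d k w = map (\<lambda>i. (i + k) mod d) w"
definition rep :: "nat \<Rightarrow> nat list \<Rightarrow> nat list" where "rep d w = sh d (d - hd w) w"
definition orb :: "nat \<Rightarrow> nat list \<Rightarrow> nat list \<Rightarrow> 'k::field" where
  "orb d v = (\<lambda>w. if alph d w \<and> rep d w = v then 1 else 0)"

lemma sh_sh: "sh d a (sh d b w) = sh d (a + b) w"
  unfolding sh_def by (simp add: mod_add_right_eq ac_simps)

lemma sh_mod: "sh d (k mod d) w = sh d k w"
  unfolding sh_def by (simp add: mod_add_right_eq)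

lemma sh_length[simp]: "length (sh d k w) = length w"
  by (simp add: sh_def)

lemma sh_Nil[simp]: "sh d k [] = []" by (simp add: sh_def)
lemma sh_eq_Nil[simp]: "sh d k w = [] \<longleftrightarrow> w = []" by (simp add: sh_def)

lemma alph_sh: "0 < d \<Longrightarrow> alph d (sh d k w)"
  by (auto simp: alph_def sh_def)

lemma sh_0: "alph d w \<Longrightarrow> sh d 0 w = w"
  by (auto simp: alph_def sh_def intro!: map_idI)

lemma sh_d: "alph d w \<Longrightarrow> sh d d w = w"
  using sh_mod[of d d w] sh_0[of d w] by simp

lemma alph_append[simp]: "alph d (a @ b) \<longleftrightarrow> alph d a \<and> alph d b"
  by (auto simp: alph_def)
lemma alph_Cons[simp]: "alph d (a # b) \<longleftrightarrow> a < d \<and> alph d b"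
  by (auto simp: alph_def)
lemma alph_Nil[simp]: "alph d []"
  by (auto simp: alph_def)
lemma alph_take: "alph d w \<Longrightarrow> alph d (take i w)"
  by (auto simp: alph_def dest: in_set_takeD)
lemma alph_drop: "alph d w \<Longrightarrow> alph d (drop i w)"
  by (auto simp: alph_def dest: in_set_dropD)

lemma arith_aux:
  fixes h c d :: nat assumes "h < d"
  shows "(d - (h + c) mod d + c) mod d = (d - h) mod d"
proof -
  define q r where "q = (h + c) div d" and "r = (h + c) mod d"
  have e: "h + c = q * d + r" unfolding q_def r_def by simp
  have "r < d" unfolding r_def using assms by simp
  then have "d - r + c = (d - h) + q * d" using e assms by linarith
  then show ?thesis unfolding r_def[symmetric] by simp
qed

lemma rep_sh:
  assumes "alph d w" shows "rep d (sh d c w) = rep d w"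
proof (cases w)
  case Nil then show ?thesis by (simp add: rep_def)
next
  case (Cons h t)
  with assms have h: "h < d" by simp
  have "rep d (sh d c w) = sh d (d - (h + c) mod d + c) w"
    using Cons by (simp add: rep_def sh_sh) (simp add: sh_def)
  also have "\<dots> = sh d ((d - (h + c) mod d + c) mod d) w" by (simp add: sh_mod)
  also have "\<dots> = sh d ((d - h) mod d) w" using arith_aux[OF h] by simp
  also have "\<dots> = rep d w" using Cons by (simp add: sh_mod rep_def)
  finally show ?thesis .
qed

lemma rep_rep: "alph d w \<Longrightarrow> rep d (rep d w) = rep d w"
  by (metis rep_def rep_sh)

lemma rep_id: "alph d w \<Longrightarrow> w = [] \<or> hd w = 0 \<Longrightarrow> rep d w = w"
  by (cases w) (auto simp: rep_def sh_d)

lemma length_rep[simp]: "length (rep d w) = length w"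
  by (simp add: rep_def)

lemma alph_rep: "0 < d \<Longrightarrow> alph d (rep d w)"
  by (simp add: rep_def alph_sh)

lemma hd_rep: "0 < d \<Longrightarrow> alph d w \<Longrightarrow> w \<noteq> [] \<Longrightarrow> hd (rep d w) = 0"
  by (cases w) (auto simp: rep_def sh_def)

lemma rep_Nil_iff[simp]: "rep d w = [] \<longleftrightarrow> w = []"
  by (simp add: rep_def)

lemma free_alg_iff: "f \<in> free_alg d \<longleftrightarrow> finite {w. f w \<noteq> 0} \<and> (\<forall>w. f w \<noteq> 0 \<longrightarrow> alph d w)"
  by (simp add: free_alg_def alph_def)

lemma fa_rho_sh: "0 < d \<Longrightarrow> fa_rho d f = (\<lambda>w. if alph d w then f (sh d (d - 1) w) else 0)"
  unfolding fa_rho_def sh_def alph_def by (auto intro!: ext arg_cong[where f=f])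

lemma inv_iff:
  assumes d: "0 < d"
  shows "f \<in> invariants d \<longleftrightarrow> f \<in> free_alg d \<and> (\<forall>c w. alph d w \<longrightarrow> f (sh d c w) = f w)"
proof
  assume "f \<in> invariants d"
  then have fa: "f \<in> free_alg d" and rho: "fa_rho d f = f" by (auto simp: invariants_def)
  have 1: "f w = f (sh d (d - 1) w)" if "alph d w" for w
    using fun_cong[OF rho, of w] that by (simp add: fa_rho_sh[OF d])
  have 2: "f (sh d 1 w) = f w" if "alph d w" for w
  proof -
    have "f (sh d 1 w) = f (sh d (d - 1) (sh d 1 w))" using 1 alph_sh[OF d] by blast
    also have "\<dots> = f w" using d that by (simp add: sh_sh sh_d)
    finally show ?thesis .
  qed
  have "f (sh d c w) = f w" if "alph d w" for c w
  proof (induction c)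
    case 0 then show ?case using that by (simp add: sh_0)
  next
    case (Suc c)
    have "sh d (Suc c) w = sh d 1 (sh d c w)" by (simp add: sh_sh)
    then show ?case using 2[OF alph_sh[OF d]] Suc by simp
  qed
  then show "f \<in> free_alg d \<and> (\<forall>c w. alph d w \<longrightarrow> f (sh d c w) = f w)" using fa by blast
next
  assume a: "f \<in> free_alg d \<and> (\<forall>c w. alph d w \<longrightarrow> f (sh d c w) = f w)"
  then have "fa_rho d f = f"
    by (auto simp: fa_rho_sh[OF d] free_alg_iff intro!: ext)
  then show "f \<in> invariants d" using a by (simp add: invariants_def)
qed

lemma inv_rep: "0 < d \<Longrightarrow> f \<in> invariants d \<Longrightarrow> alph d w \<Longrightarrow> f (rep d w) = f w"
  unfolding rep_def using inv_iff by blast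

lemma inv_alph: "f \<in> invariants d \<Longrightarrow> f w \<noteq> 0 \<Longrightarrow> alph d w"
  by (auto simp: invariants_def free_alg_iff)

lemma inv_zero: "0 < d \<Longrightarrow> (0 :: nat list \<Rightarrow> 'k::field) \<in> invariants d"
  by (simp add: inv_iff free_alg_iff)

lemma inv_add: assumes "0 < d" "f \<in> invariants d" "g \<in> invariants d"
  shows "f + g \<in> invariants d"
proof -
  have "{w. (f + g) w \<noteq> 0} \<subseteq> {w. f w \<noteq> 0} \<union> {w. g w \<noteq> 0}" by auto
  then show ?thesis using assms by (auto simp: inv_iff free_alg_iff intro: finite_subset)
qed

lemma inv_scale: assumes "0 < d" "f \<in> invariants d"
  shows "fa_scale c f \<in> invariants d"
proof -
  have "{w. fa_scale c f w \<noteq> 0} \<subseteq> {w. f w \<noteq> 0}" by (auto simp: fa_scale_def)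
  then show ?thesis using assms by (auto simp: inv_iff free_alg_iff fa_scale_def intro: finite_subset)
qed

lemma inv_diff: assumes "0 < d" "f \<in> invariants d" "g \<in> invariants d"
  shows "f - g \<in> invariants d"
proof -
  have "f - g = f + fa_scale (-1) g" by (auto simp: fa_scale_def fun_eq_iff)
  then show ?thesis using assms inv_add inv_scale by metis
qed

lemma inv_subspace: assumes "0 < d" shows "FA.subspace (invariants d :: (nat list \<Rightarrow> 'k::field) set)"
  unfolding FA.subspace_def
proof (intro conjI ballI allI)
  show "0 \<in> (invariants d :: (nat list \<Rightarrow> 'k::field) set)" by (rule inv_zero[OF assms])
  show "x + y \<in> invariants d" if "x \<in> invariants d" "y \<in> invariants d" for x y :: "nat list \<Rightarrow> 'k"
    by (rule inv_add[OF assms that])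
  show "fa_scale c x \<in> invariants d" if "x \<in> invariants d" for c and x :: "nat list \<Rightarrow> 'k"
    by (rule inv_scale[OF assms that])
qed

lemma fa_one_inv: assumes d: "0 < d" shows "(fa_one :: nat list \<Rightarrow> 'k::field) \<in> invariants d"
proof -
  have "{w. (fa_one w :: 'k) \<noteq> 0} = {[]}" by (auto simp: fa_one_def)
  then have "finite {w. (fa_one w :: 'k) \<noteq> 0}" by simp
  moreover have "(fa_one w :: 'k) \<noteq> 0 \<Longrightarrow> alph d w" for w by (simp add: fa_one_def split: if_splits)
  moreover have "(fa_one (sh d c w) :: 'k) = fa_one w" for c w by (simp add: fa_one_def)
  ultimately show ?thesis unfolding inv_iff[OF d] free_alg_iff by blast
qed

lemma sum_nonzero_ex: "sum h A \<noteq> 0 \<Longrightarrow> \<exists>i\<in>A. h i \<noteq> 0"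
  by (meson sum.neutral)

lemma fa_mult_nz: assumes "fa_mult f g w \<noteq> 0" shows "\<exists>i\<le>length w. f (take i w) \<noteq> 0 \<and> g (drop i w) \<noteq> 0"
proof -
  obtain i where "i \<in> {..length w}" "f (take i w) * g (drop i w) \<noteq> 0"
    using sum_nonzero_ex[OF assms[unfolded fa_mult_def]] by blast
  then show ?thesis by auto
qed

lemma take_sh: "take i (sh d c w) = sh d c (take i w)" by (simp add: sh_def take_map)
lemma drop_sh: "drop i (sh d c w) = sh d c (drop i w)" by (simp add: sh_def drop_map)

lemma fa_mult_inv: assumes d: "0 < d" and f: "f \<in> invariants d" and g: "g \<in> invariants d"
  shows "fa_mult f g \<in> invariants d"
proof -
  let ?Sf = "{w. f w \<noteq> 0}" and ?Sg = "{w. g w \<noteq> 0}"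
  have fin: "finite ?Sf" "finite ?Sg" using f g by (auto simp: inv_iff[OF d] free_alg_iff)
  have "{w. fa_mult f g w \<noteq> 0} \<subseteq> (\<lambda>(a, b). a @ b) ` (?Sf \<times> ?Sg)"
  proof
    fix w assume "w \<in> {w. fa_mult f g w \<noteq> 0}"
    then have nz: "fa_mult f g w \<noteq> 0" by simp
    obtain i where "f (take i w) \<noteq> 0" "g (drop i w) \<noteq> 0" using fa_mult_nz[OF nz] by blast
    then show "w \<in> (\<lambda>(a, b). a @ b) ` (?Sf \<times> ?Sg)"
      by (intro image_eqI[of _ _ "(take i w, drop i w)"]) auto
  qed
  then have 1: "finite {w. fa_mult f g w \<noteq> 0}" using fin by (meson finite_SigmaI finite_imageI finite_subset)
  have 2: "alph d w" if nz: "fa_mult f g w \<noteq> 0" for w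
  proof -
    obtain i where "f (take i w) \<noteq> 0" "g (drop i w) \<noteq> 0" using fa_mult_nz[OF nz] by blast
    then have "alph d (take i w)" "alph d (drop i w)" using inv_alph f g by blast+
    then show ?thesis by (metis alph_append append_take_drop_id)
  qed
  have 3: "fa_mult f g (sh d c w) = fa_mult f g w" if "alph d w" for c w
  proof -
    have "f (take i (sh d c w)) * g (drop i (sh d c w)) = f (take i w) * g (drop i w)" for i
      using f g that alph_take alph_drop by (simp add: take_sh drop_sh inv_iff[OF d])
    then show ?thesis by (simp add: fa_mult_def)
  qed
  show ?thesis using 1 2 3 by (simp add: inv_iff[OF d] free_alg_iff)
qed

lemma fa_prod_inv: "0 < d \<Longrightarrow> set zs \<subseteq> invariants d \<Longrightarrow> fa_prod zs \<in> invariants d"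
  by (induction zs) (auto simp: fa_prod_def fa_one_inv fa_mult_inv)

lemma fa_mult_single:
  assumes "\<And>x. f x \<noteq> 0 \<Longrightarrow> length x = m"
  shows "fa_mult f g w = (if m \<le> length w then f (take m w) * g (drop m w) else 0)"
proof -
  have "fa_mult f g w = (\<Sum>i\<le>length w. if i = m then f (take m w) * g (drop m w) else 0)"
    unfolding fa_mult_def
  proof (rule sum.cong)
    fix i assume "i \<in> {..length w}"
    show "f (take i w) * g (drop i w) = (if i = m then f (take m w) * g (drop m w) else 0)"
    proof (cases "i = m")
      case False
      have "length (take i w) \<noteq> m" using False \<open>i \<in> {..length w}\<close> by simp
      then have "f (take i w) = 0" using assms by blast
      then show ?thesis using False by simp
    qed simp
  qed simp
  then show ?thesis by simp
qed

lemma fa_mult_one: "fa_mult f fa_one = f"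
proof
  fix w
  have "fa_mult f fa_one w = (\<Sum>i\<le>length w. if i = length w then f w else 0)"
    unfolding fa_mult_def by (rule sum.cong) (auto simp: fa_one_def)
  then show "fa_mult f fa_one w = f w" by simp
qed

lemma hom_mult: "homogeneous m f \<Longrightarrow> homogeneous n g \<Longrightarrow> homogeneous (m + n) (fa_mult f g)"
  unfolding homogeneous_def
proof (intro allI impI)
  fix w assume "\<forall>w. f w \<noteq> 0 \<longrightarrow> length w = m" "\<forall>w. g w \<noteq> 0 \<longrightarrow> length w = n" "fa_mult f g w \<noteq> 0"
  then obtain i where "i \<le> length w" "length (take i w) = m" "length (drop i w) = n"
    using fa_mult_nz by blast
  then show "length w = m + n" by simp
qed

lemma hom_one: "homogeneous 0 fa_one"
  by (simp add: homogeneous_def fa_one_def)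

lemma orb_nz: "orb d v w \<noteq> 0 \<longleftrightarrow> alph d w \<and> rep d w = v"
  by (simp add: orb_def)

lemma orb_hom: "homogeneous (length v) (orb d v)"
  by (auto simp: homogeneous_def orb_def)

lemma orb_self: "alph d v \<Longrightarrow> rep d v = v \<Longrightarrow> orb d v v = 1"
  by (simp add: orb_def)

lemma orb_inv: assumes d: "0 < d" shows "orb d v \<in> invariants d"
proof -
  have "{w. (orb d v w :: 'a) \<noteq> 0} \<subseteq> {w. set w \<subseteq> {..<d} \<and> length w = length v}"
    by (auto simp: orb_def alph_def)
  then have "finite {w. (orb d v w :: 'a) \<noteq> 0}"
    by (rule finite_subset) (simp add: finite_lists_length_eq)
  moreover have "orb d v (sh d c w) = orb d v w" if "alph d w" for c w
    using that alph_sh[OF d] rep_sh by (simp add: orb_def)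
  moreover have "orb d v w \<noteq> 0 \<Longrightarrow> alph d w" for w by (simp add: orb_def split: if_splits)
  ultimately show ?thesis unfolding inv_iff[OF d] free_alg_iff by blast
qed

lemma indep_tri:
  fixes F :: "'i \<Rightarrow> nat list \<Rightarrow> 'k::field" and p :: "'i \<Rightarrow> nat list"
  assumes inj: "inj_on p I" and diag: "\<And>i. i \<in> I \<Longrightarrow> F i (p i) \<noteq> 0"
    and tri: "\<And>i j. i \<in> I \<Longrightarrow> j \<in> I \<Longrightarrow> F j (p i) \<noteq> 0 \<Longrightarrow> p j \<le> p i"
  shows "inj_on F I" "\<not> FA.dependent (F ` I)"
proof -
  show injF: "inj_on F I"
  proof (rule inj_onI)
    fix i j assume ij: "i \<in> I" "j \<in> I" "F i = F j"
    then have "p j \<le> p i" "p i \<le> p j" using diag tri by metis+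
    then show "i = j" using inj ij by (meson antisym inj_onD)
  qed
  show "\<not> FA.dependent (F ` I)"
    unfolding FA.independent_explicit_finite_subsets
  proof (intro allI impI ballI)
    fix S u v assume S: "S \<subseteq> F ` I" "finite S" and sum0: "(\<Sum>v\<in>S. fa_scale (u v) v) = 0" and v: "v \<in> S"
    show "u v = 0"
    proof (rule ccontr)
      assume uv: "u v \<noteq> 0"
      define S' where "S' = {v\<in>S. u v \<noteq> 0}"
      define idx where "idx = inv_into I F"
      have idx: "x \<in> S \<Longrightarrow> idx x \<in> I \<and> F (idx x) = x" for x
        using S unfolding idx_def by (auto intro: inv_into_into f_inv_into_f)
      have S'ne: "S' \<noteq> {}" "finite S'" using v uv S unfolding S'_def by auto
      define m where "m = Min ((\<lambda>x. p (idx x)) ` S')"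
      have "m \<in> (\<lambda>x. p (idx x)) ` S'" unfolding m_def using S'ne by simp
      then obtain v0 where v0: "v0 \<in> S'" "p (idx v0) = m" by auto
      have mmin: "x \<in> S' \<Longrightarrow> m \<le> p (idx x)" for x unfolding m_def using S'ne by simp
      have "(\<Sum>v\<in>S. fa_scale (u v) v) (p (idx v0)) = (\<Sum>v\<in>S. u v * v (p (idx v0)))"
        by (simp add: fun_sum_apply fa_scale_def)
      also have "\<dots> = (\<Sum>v\<in>S. if v = v0 then u v0 * v0 (p (idx v0)) else 0)"
      proof (rule sum.cong)
        fix x assume x: "x \<in> S"
        show "u x * x (p (idx v0)) = (if x = v0 then u v0 * v0 (p (idx v0)) else 0)"
        proof (cases "x = v0 \<or> u x = 0 \<or> x (p (idx v0)) = 0")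
          case False
          then have "x \<in> S'" using x unfolding S'_def by auto
          have "F (idx x) (p (idx v0)) \<noteq> 0" using False idx x by simp
          then have "p (idx x) \<le> p (idx v0)" using tri idx x v0 unfolding S'_def by auto
          with mmin[OF \<open>x \<in> S'\<close>] v0 have "p (idx x) = p (idx v0)" by simp
          then have "idx x = idx v0" using inj idx x v0 unfolding S'_def by (auto dest: inj_onD)
          then have "x = v0" using idx x v0 unfolding S'_def by (metis (no_types, lifting) mem_Collect_eq)
          then show ?thesis using False by simp
        qed auto
      qed simp
      also have "\<dots> = u v0 * v0 (p (idx v0))" using v0 S(2) unfolding S'_def by (simp only: sum.delta') simp
      also have "\<dots> \<noteq> 0"
      proof -
        have "v0 \<in> S" "u v0 \<noteq> 0" using v0 unfolding S'_def by auto
        then have "idx v0 \<in> I" "F (idx v0) = v0" using idx by auto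
        then have "v0 (p (idx v0)) \<noteq> 0" using diag by metis
        then show ?thesis using \<open>u v0 \<noteq> 0\<close> by simp
      qed
      finally show False using sum0 by simp
    qed
  qed
qed

definition Rn :: "nat \<Rightarrow> nat \<Rightarrow> nat list set" where
  "Rn d n = {v. alph d v \<and> length v = n \<and> rep d v = v}"

lemma Rn_0: "Rn d 0 = {[]}"
  by (auto simp: Rn_def rep_def)

lemma Rn_Suc: assumes d: "0 < d"
  shows "Rn d (Suc n) = (\<lambda>t. 0 # t) ` {t. set t \<subseteq> {..<d} \<and> length t = n}"
proof
  show "Rn d (Suc n) \<subseteq> (\<lambda>t. 0 # t) ` {t. set t \<subseteq> {..<d} \<and> length t = n}"
  proof
    fix v assume v: "v \<in> Rn d (Suc n)"
    then have v1: "v \<noteq> []" "alph d v" "rep d v = v" "length v = Suc n" by (auto simp: Rn_def)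
    then have "hd v = 0" using hd_rep[OF d] by metis
    then have e: "v = 0 # tl v" using v1(1) by (cases v) auto
    have "alph d (tl v)" using v1(2) e by (metis alph_Cons)
    then have "tl v \<in> {t. set t \<subseteq> {..<d} \<and> length t = n}" using v1(4) by (simp add: alph_def)
    then show "v \<in> (\<lambda>t. 0 # t) ` {t. set t \<subseteq> {..<d} \<and> length t = n}" using e by blast
  qed
next
  show "(\<lambda>t. 0 # t) ` {t. set t \<subseteq> {..<d} \<and> length t = n} \<subseteq> Rn d (Suc n)"
  proof
    fix v assume "v \<in> (\<lambda>t. 0 # t) ` {t. set t \<subseteq> {..<d} \<and> length t = n}"
    then obtain t where t: "v = 0 # t" "set t \<subseteq> {..<d}" "length t = n" by blast
    then have a: "alph d v" using d by (simp add: alph_def)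
    then have "rep d v = v" using t(1) by (intro rep_id) auto
    then show "v \<in> Rn d (Suc n)" using a t by (simp add: Rn_def)
  qed
qed

lemma Rn_finite: "0 < d \<Longrightarrow> finite (Rn d n)"
  by (cases n) (simp_all add: Rn_0 Rn_Suc finite_lists_length_eq)

lemma Rn_card: assumes "0 < d" shows "card (Rn d n) = (if n = 0 then 1 else d ^ (n - 1))"
proof (cases n)
  case 0 then show ?thesis by (simp add: Rn_0)
next
  case (Suc m)
  have "card (Rn d n) = card {t. set t \<subseteq> {..<d} \<and> length t = m}"
    unfolding Suc Rn_Suc[OF assms] by (rule card_image) (simp add: inj_on_def)
  also have "\<dots> = d ^ m" by (simp add: card_lists_length_eq)
  finally show ?thesis using Suc by simp
qed

lemma comp_expand:
  assumes d: "0 < d" and f: "f \<in> inv_component d n"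
  shows "f = (\<Sum>v\<in>Rn d n. fa_scale (f v) (orb d v))"
proof
  fix w
  have fi: "f \<in> invariants d" and fh: "homogeneous n f" using f by (auto simp: inv_component_def)
  have "(\<Sum>v\<in>Rn d n. fa_scale (f v) (orb d v)) w = (\<Sum>v\<in>Rn d n. f v * orb d v w)"
    by (simp add: fun_sum_apply fa_scale_def)
  also have "\<dots> = f w"
  proof (cases "alph d w \<and> length w = n")
    case True
    have "(\<Sum>v\<in>Rn d n. f v * orb d v w) = (\<Sum>v\<in>Rn d n. if v = rep d w then f (rep d w) else 0)"
      by (rule sum.cong) (auto simp: orb_def True)
    also have "\<dots> = f (rep d w)"
    proof -
      have "rep d w \<in> Rn d n" using True d by (simp add: Rn_def alph_rep rep_rep)
      then show ?thesis using Rn_finite[OF d] by (simp add: sum.delta')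
    qed
    also have "\<dots> = f w" using inv_rep[OF d fi] True by blast
    finally show ?thesis .
  next
    case False
    have "f v * orb d v w = 0" if "v \<in> Rn d n" for v
      using False that by (auto simp: orb_def Rn_def)
    then have "(\<Sum>v\<in>Rn d n. f v * orb d v w) = 0" by (intro sum.neutral) blast
    moreover have "f w = 0" using False inv_alph[OF fi, of w] fh by (auto simp: homogeneous_def)
    ultimately show ?thesis by simp
  qed
  finally show "f w = (\<Sum>v\<in>Rn d n. fa_scale (f v) (orb d v)) w" by simp
qed

lemma comp_span: assumes d: "0 < d"
  shows "inv_component d n \<subseteq> FA.span (orb d ` Rn d n :: (nat list \<Rightarrow> 'k::field) set)"
proof
  fix f :: "nat list \<Rightarrow> 'k" assume f: "f \<in> inv_component d n"
  have "(\<Sum>v\<in>Rn d n. fa_scale (f v) (orb d v)) \<in> FA.span (orb d ` Rn d n)"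
    by (intro FA.span_sum FA.span_scale FA.span_base) auto
  then show "f \<in> FA.span (orb d ` Rn d n)" using comp_expand[OF d f] by simp
qed

lemma orb_in_comp: assumes d: "0 < d" and v: "v \<in> Rn d n" shows "orb d v \<in> inv_component d n"
proof -
  have "length v = n" using v by (simp add: Rn_def)
  then show ?thesis unfolding inv_component_def using orb_inv[OF d, of v] orb_hom[of v d] by simp
qed

lemma orb_tri: assumes d: "0 < d"
  shows "inj_on (orb d :: _ \<Rightarrow> _ \<Rightarrow> 'k::field) (Rn d n)"
    "\<not> FA.dependent (orb d ` Rn d n :: (nat list \<Rightarrow> 'k::field) set)"
proof -
  have a: "inj_on id (Rn d n)" by simp
  have b: "(orb d i (id i) :: 'k) \<noteq> 0" if "i \<in> Rn d n" for i
  proof -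
    have "alph d i" "rep d i = i" using that by (auto simp: Rn_def)
    then show ?thesis by (simp add: orb_def)
  qed
  have c: "id j \<le> id i" if "i \<in> Rn d n" "j \<in> Rn d n" "(orb d j (id i) :: 'k) \<noteq> 0" for i j
  proof -
    have "rep d i = j" using that(3) unfolding orb_def by (simp split: if_splits)
    moreover have "rep d i = i" using that(1) by (simp add: Rn_def)
    ultimately show ?thesis by simp
  qed
  show "inj_on (orb d :: _ \<Rightarrow> _ \<Rightarrow> 'k::field) (Rn d n)"
    "\<not> FA.dependent (orb d ` Rn d n :: (nat list \<Rightarrow> 'k::field) set)"
    using indep_tri[where F="orb d" and p=id and I="Rn d n", OF a b c] by blast+
qed

lemma inv_dim_eq: assumes d: "0 < d"
  shows "inv_dim (K :: 'k::field itself) d n = (if n = 0 then 1 else d ^ (n - 1))"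
proof -
  have "FA.dim (inv_component d n :: (nat list \<Rightarrow> 'k) set) = card (orb d ` Rn d n :: (nat list \<Rightarrow> 'k) set)"
  proof (rule FA.dim_unique)
    show "orb d ` Rn d n \<subseteq> (inv_component d n :: (nat list \<Rightarrow> 'k) set)" using orb_in_comp[OF d] by blast
    show "(inv_component d n :: (nat list \<Rightarrow> 'k) set) \<subseteq> FA.span (orb d ` Rn d n)" by (rule comp_span[OF d])
    show "\<not> FA.dependent (orb d ` Rn d n :: (nat list \<Rightarrow> 'k) set)" by (rule orb_tri[OF d])
  qed simp
  also have "\<dots> = card (Rn d n)" by (rule card_image[OF orb_tri(1)[OF d]])
  finally show ?thesis unfolding inv_dim_def using Rn_card[OF d] by simp
qed

lemma hilbert_eq: assumes d: "0 < d"
  shows "hilbert_series (K :: 'k::field itself) d = (1 - of_nat (d - 1) * fps_X) / (1 - of_nat d * fps_X)"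
proof -
  define A where "A = hilbert_series K d"
  define H :: "rat fps" where "H = 1 - of_nat d * fps_X"
  have An: "fps_nth A n = (if n = 0 then 1 else of_nat d ^ (n - 1))" for n
    unfolding A_def hilbert_series_def by (simp add: inv_dim_eq[OF d])
  have H0: "fps_nth H 0 \<noteq> 0" unfolding H_def by simp
  have "A * H = 1 - of_nat (d - 1) * fps_X"
  proof (rule fps_ext)
    fix n
    have "A * H = A - fps_const (of_nat d) * (fps_X * A)"
      unfolding H_def by (simp add: algebra_simps fps_of_nat[symmetric])
    then have "fps_nth (A * H) n = fps_nth A n - of_nat d * (if n = 0 then 0 else fps_nth A (n - 1))"
      by simp
    also have "\<dots> = fps_nth (1 - of_nat (d - 1) * fps_X :: rat fps) n"
    proof -
      have eq: "(1 - of_nat (d - 1) * fps_X :: rat fps) = 1 - fps_const (of_nat (d - 1)) * fps_X"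
        by (simp add: fps_of_nat[symmetric])
      consider "n = 0" | "n = 1" | "n \<ge> 2" by linarith
      then show ?thesis
      proof cases
        case 1 then show ?thesis by (simp add: An eq)
      next
        case 2 then show ?thesis using d by (simp add: An eq of_nat_diff)
      next
        case 3
        then obtain k where k: "n = Suc (Suc k)" by (metis add_2_eq_Suc le_Suc_ex)
        then show ?thesis by (simp add: An eq)
      qed
    qed
    finally show "fps_nth (A * H) n = fps_nth (1 - of_nat (d - 1) * fps_X :: rat fps) n" .
  qed
  then have "(1 - of_nat (d - 1) * fps_X) / H = A * H * inverse H"
    using fps_divide_unit[OF H0] by simp
  also have "\<dots> = A" using inverse_mult_eq_1'[OF H0] by (simp add: mult.assoc)
  finally show ?thesis unfolding A_def H_def by simp
qed

definition Gs :: "nat \<Rightarrow> nat list set" where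
  "Gs d = {v. \<exists>t. v = 0 # t \<and> alph d t \<and> 0 \<notin> set t}"

definition Pw :: "nat \<Rightarrow> nat list list \<Rightarrow> nat list \<Rightarrow> 'k::field" where
  "Pw d vs = fa_prod (map (orb d) vs)"

lemma Pw_Nil: "Pw d [] = fa_one" by (simp add: Pw_def fa_prod_def)
lemma Pw_Cons: "Pw d (v # vs) = fa_mult (orb d v) (Pw d vs)" by (simp add: Pw_def fa_prod_def)

lemma orb_len: assumes "orb d v x \<noteq> 0" shows "length x = length v"
proof -
  have "rep d x = v" using assms by (simp add: orb_def split: if_splits)
  then show ?thesis by (metis length_rep)
qed

lemma Pw_Cons_eval: "Pw d (v # vs) u =
   (if length v \<le> length u then orb d v (take (length v) u) * Pw d vs (drop (length v) u) else 0)"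
  unfolding Pw_Cons by (rule fa_mult_single) (rule orb_len)

lemma G_props: assumes "0 < d" "v \<in> Gs d"
  shows "alph d v" "rep d v = v" "v \<noteq> []" "hd v = 0"
proof -
  obtain t where t: "v = 0 # t" "alph d t" "0 \<notin> set t" using assms(2) by (auto simp: Gs_def)
  then show "alph d v" using assms(1) by simp
  then show "rep d v = v" using t by (intro rep_id) auto
  show "v \<noteq> []" "hd v = 0" using t by auto
qed

lemma K1: assumes d: "0 < d" shows "vs \<in> lists (Gs d) \<Longrightarrow> (Pw d vs (concat vs) :: 'k::field) = 1"
proof (induction vs)
  case Nil then show ?case by (simp add: Pw_Nil fa_one_def)
next
  case (Cons v vs)
  have "(orb d v v :: 'k) = 1" using G_props[OF d] Cons.prems by (simp add: orb_def)
  then show ?case using Cons by (simp add: Pw_Cons_eval)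
qed

lemma append_le: "(xs @ a \<le> xs @ (b :: nat list)) \<longleftrightarrow> a \<le> b"
  by (induction xs) auto

lemma K2: assumes d: "0 < d"
  shows "vs \<in> lists (Gs d) \<Longrightarrow> (Pw d vs u :: 'k::field) \<noteq> 0 \<Longrightarrow>
         length u = length (concat vs) \<and> concat vs \<le> u"
proof (induction vs arbitrary: u)
  case Nil then show ?case by (simp add: Pw_Nil fa_one_def split: if_splits)
next
  case (Cons v vs)
  define m where "m = length v"
  define x where "x = take m u"
  define y where "y = drop m u"
  have nz: "m \<le> length u" "(orb d v x :: 'k) \<noteq> 0" "(Pw d vs y :: 'k) \<noteq> 0"
    using Cons.prems(2) unfolding Pw_Cons_eval m_def[symmetric] x_def y_def by (auto split: if_splits)
  have vs: "vs \<in> lists (Gs d)" and vG: "v \<in> Gs d" using Cons.prems(1) by auto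
  have IH: "length y = length (concat vs)" "concat vs \<le> y" using Cons.IH[OF vs nz(3)] by auto
  have u: "u = x @ y" unfolding x_def y_def by simp
  have lx: "length x = m" using nz(1) unfolding x_def by simp
  have len: "length u = length (concat (v # vs))" using u lx IH(1) unfolding m_def by simp
  obtain t where t: "v = 0 # t" using vG by (auto simp: Gs_def)
  have ax: "alph d x" "rep d x = v" using nz(2) by (auto simp: orb_def split: if_splits)
  have "x \<noteq> []" using lx t unfolding m_def by auto
  then obtain a x' where x: "x = a # x'" by (cases x) auto
  have "concat (v # vs) \<le> u"
  proof (cases "a = 0")
    case True
    then have "rep d x = x" using ax(1) x by (intro rep_id) auto
    then have "x = v" using ax(2) by simp
    then show ?thesis using u IH(2) by (simp add: append_le)
  next
    case False
    then show ?thesis using u x t by simp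
  qed
  then show ?case using len by simp
qed

lemma decomp: assumes d: "0 < d"
  shows "alph d v \<Longrightarrow> v = [] \<or> hd v = 0 \<Longrightarrow> \<exists>vs\<in>lists (Gs d). concat vs = v"
proof (induction "length v" arbitrary: v rule: less_induct)
  case less
  show ?case
  proof (cases v)
    case Nil then show ?thesis by (intro bexI[of _ "[]"]) auto
  next
    case (Cons a rest)
    then have a: "a = 0" using less.prems by simp
    define t where "t = takeWhile (\<lambda>x. x \<noteq> 0) rest"
    define r where "r = dropWhile (\<lambda>x. x \<noteq> 0) rest"
    have rest: "rest = t @ r" unfolding t_def r_def by simp
    have ar: "alph d r" "alph d t" using less.prems(1) Cons rest by auto
    have hr: "r = [] \<or> hd r = 0"
    proof (cases "r = []")
      case False
      have "\<not> (hd r \<noteq> 0)" unfolding r_def by (rule hd_dropWhile[OF False[unfolded r_def]])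
      then show ?thesis by simp
    qed simp
    have lr: "length r < length v" using Cons rest by simp
    obtain ws where ws: "ws \<in> lists (Gs d)" "concat ws = r" using less.hyps[OF lr ar(1) hr] by blast
    have "0 \<notin> set t" unfolding t_def by (auto dest: set_takeWhileD)
    then have "(0 # t) \<in> Gs d" using ar(2) by (auto simp: Gs_def)
    then show ?thesis using ws Cons a rest by (intro bexI[of _ "(0 # t) # ws"]) auto
  qed
qed

lemma concat_G: "vs \<in> lists (Gs d) \<Longrightarrow> concat vs = [] \<or> hd (concat vs) = 0"
  by (cases vs) (auto simp: Gs_def)

lemma concat_G_Nil: "vs \<in> lists (Gs d) \<Longrightarrow> concat vs = [] \<Longrightarrow> vs = []"
  by (cases vs) (auto simp: Gs_def)

lemma takeWhile_aux: "r = [] \<or> hd r = 0 \<Longrightarrow> 0 \<notin> set t \<Longrightarrow> takeWhile (\<lambda>x. x \<noteq> (0::nat)) (t @ r) = t"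
proof (induction t)
  case Nil then show ?case by (cases r) auto
next
  case (Cons a t) then show ?case by simp
qed

lemma concat_inj: "vs \<in> lists (Gs d) \<Longrightarrow> ws \<in> lists (Gs d) \<Longrightarrow> concat vs = concat ws \<Longrightarrow> vs = ws"
proof (induction vs arbitrary: ws)
  case Nil
  have "concat ws = []" using Nil.prems(3) by simp
  then show ?case using concat_G_Nil[OF Nil.prems(2)] by simp
next
  case (Cons v vs)
  obtain t where t: "v = 0 # t" "0 \<notin> set t" using Cons.prems(1) by (auto simp: Gs_def)
  have "ws \<noteq> []" using Cons.prems(3) t by auto
  then obtain w ws' where ws: "ws = w # ws'" by (cases ws) auto
  obtain t' where t': "w = 0 # t'" "0 \<notin> set t'" using Cons.prems(2) ws by (auto simp: Gs_def)
  have vs: "vs \<in> lists (Gs d)" and ws': "ws' \<in> lists (Gs d)" using Cons.prems ws by auto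
  have e: "t @ concat vs = t' @ concat ws'" using Cons.prems(3) t t' ws by simp
  have "t = t'"
    using takeWhile_aux[OF concat_G[OF vs] t(2)] takeWhile_aux[OF concat_G[OF ws'] t'(2)] e by metis
  then have "concat vs = concat ws'" using e by simp
  then have "vs = ws'" using Cons.IH[OF vs ws'] by simp
  then show ?case using ws t t' \<open>t = t'\<close> by simp
qed

lemma Pw_inv: "0 < d \<Longrightarrow> Pw d vs \<in> invariants d"
  unfolding Pw_def by (rule fa_prod_inv) (auto intro: orb_inv)

lemma Pw_tri: assumes d: "0 < d"
  shows "inj_on (Pw d :: _ \<Rightarrow> _ \<Rightarrow> 'k::field) (lists (Gs d))"
    "\<not> FA.dependent (Pw d ` lists (Gs d) :: (nat list \<Rightarrow> 'k::field) set)"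
proof -
  have a: "inj_on concat (lists (Gs d))" using concat_inj by (meson inj_onI)
  have b: "(Pw d i (concat i) :: 'k) \<noteq> 0" if "i \<in> lists (Gs d)" for i
  proof -
    have "(Pw d i (concat i) :: 'k) = 1" by (rule K1[OF d that])
    then show ?thesis by simp
  qed
  have c: "concat j \<le> concat i" if "i \<in> lists (Gs d)" "j \<in> lists (Gs d)" "(Pw d j (concat i) :: 'k) \<noteq> 0" for i j
    using K2[OF d that(2,3)] by simp
  show "inj_on (Pw d :: _ \<Rightarrow> _ \<Rightarrow> 'k::field) (lists (Gs d))"
    "\<not> FA.dependent (Pw d ` lists (Gs d) :: (nat list \<Rightarrow> 'k::field) set)"
    using indep_tri[where F="Pw d" and p=concat and I="lists (Gs d)", OF a b c] by blast+
qed

definition Sf :: "nat \<Rightarrow> (nat list \<Rightarrow> 'k::field) \<Rightarrow> nat list set" where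
  "Sf d f = {v. alph d v \<and> rep d v = v \<and> f v \<noteq> 0}"
definition Uf :: "nat \<Rightarrow> (nat list \<Rightarrow> 'k::field) \<Rightarrow> nat list set" where
  "Uf d f = {u. alph d u \<and> rep d u = u \<and> (\<exists>s\<in>Sf d f. length u = length s \<and> s \<le> u)}"

lemma Sf_sub_Uf: "Sf d f \<subseteq> Uf d f"
  unfolding Uf_def Sf_def by blast

lemma Uf_finite: assumes "f \<in> invariants d" shows "finite (Uf d f)"
proof -
  have "Sf d f \<subseteq> {w. f w \<noteq> 0}" by (auto simp: Sf_def)
  then have fin: "finite (Sf d f)" using assms by (auto simp: invariants_def free_alg_def intro: finite_subset)
  have "Uf d f \<subseteq> (\<Union>s\<in>Sf d f. {u. set u \<subseteq> {..<d} \<and> length u = length s})"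
    by (auto simp: Uf_def alph_def)
  moreover have "finite (\<Union>s\<in>Sf d f. {u. set u \<subseteq> {..<d} \<and> length u = length s})"
    using fin by (intro finite_UN_I) (simp_all add: finite_lists_length_eq)
  ultimately show ?thesis by (rule finite_subset)
qed

lemma span_all:
  fixes f :: "nat list \<Rightarrow> 'k::field"
  assumes d: "0 < d"
  shows "f \<in> invariants d \<Longrightarrow> f \<in> FA.span (Pw d ` lists (Gs d))"
proof (induction "card (Uf d f)" arbitrary: f rule: less_induct)
  case less
  show ?case
  proof (cases "Sf d f = {}")
    case True
    have "f = 0"
    proof
      fix w show "f w = 0 w"
      proof (cases "alph d w")
        case True
        have "rep d w \<notin> Sf d f" using \<open>Sf d f = {}\<close> by simp
        then have "f (rep d w) = 0" using True d by (simp add: Sf_def alph_rep rep_rep)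
        then show ?thesis using inv_rep[OF d less.prems True] by simp
      next
        case False then show ?thesis using inv_alph[OF less.prems] by auto
      qed
    qed
    then show ?thesis by (simp add: FA.span_zero)
  next
    case False
    have finU: "finite (Uf d f)" by (rule Uf_finite[OF less.prems])
    have finS: "finite (Sf d f)" using Sf_sub_Uf finU by (rule finite_subset)
    define v where "v = Min (Sf d f)"
    have vS: "v \<in> Sf d f" unfolding v_def using finS False by simp
    have vmin: "v \<le> s" if "s \<in> Sf d f" for s unfolding v_def using finS that by simp
    have va: "alph d v" "rep d v = v" "f v \<noteq> 0" using vS by (auto simp: Sf_def)
    have "v = [] \<or> hd v = 0" using hd_rep[OF d va(1)] va(2) by metis
    then obtain vs where vs: "vs \<in> lists (Gs d)" "concat vs = v" using decomp[OF d va(1)] by blast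
    define g where "g = f - fa_scale (f v) (Pw d vs)"
    have gi: "g \<in> invariants d" unfolding g_def
      by (rule inv_diff[OF d less.prems inv_scale[OF d Pw_inv[OF d]]])
    have P1: "(Pw d vs v :: 'k) = 1" using K1[OF d vs(1)] vs(2) by simp
    have gv: "g v = 0" using P1 by (simp add: g_def fa_scale_def)
    have SgU: "Sf d g \<subseteq> Uf d f - {v}"
    proof
      fix s assume s: "s \<in> Sf d g"
      then have sa: "alph d s" "rep d s = s" "g s \<noteq> 0" by (auto simp: Sf_def)
      have "s \<noteq> v" using sa(3) gv by auto
      moreover have "s \<in> Uf d f"
      proof (cases "f s = 0")
        case True
        then have "(Pw d vs s :: 'k) \<noteq> 0" using sa(3) by (auto simp: g_def fa_scale_def)
        then have "length s = length v \<and> v \<le> s" using K2[OF d vs(1)] vs(2) by metis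
        then show ?thesis using sa vS unfolding Uf_def by blast
      next
        case False
        then have "s \<in> Sf d f" using sa by (simp add: Sf_def)
        then show ?thesis using Sf_sub_Uf by blast
      qed
      ultimately show "s \<in> Uf d f - {v}" by simp
    qed
    have UgU: "Uf d g \<subseteq> Uf d f - {v}"
    proof
      fix u assume u: "u \<in> Uf d g"
      then obtain s where s: "s \<in> Sf d g" "length u = length s" "s \<le> u"
        and ua: "alph d u" "rep d u = u" by (auto simp: Uf_def)
      have "s \<in> Uf d f" "s \<noteq> v" using SgU s(1) by auto
      then obtain s' where s': "s' \<in> Sf d f" "length s = length s'" "s' \<le> s" by (auto simp: Uf_def)
      have "s' \<le> u" using s'(3) s(3) by (rule order_trans)
      then have "u \<in> Uf d f" using ua s(2) s'(1,2) unfolding Uf_def by auto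
      moreover have "u \<noteq> v"
      proof
        assume "u = v"
        then have "s \<le> v" using s by simp
        moreover have "v \<le> s'" using vmin s'(1) by blast
        ultimately have "s = v" using s'(3) by simp
        then show False using \<open>s \<noteq> v\<close> by simp
      qed
      ultimately show "u \<in> Uf d f - {v}" by simp
    qed
    have vU: "v \<in> Uf d f" using vS Sf_sub_Uf by blast
    have "card (Uf d g) \<le> card (Uf d f - {v})" using UgU finU by (intro card_mono) auto
    also have "\<dots> < card (Uf d f)" by (rule card_Diff1_less[OF finU vU])
    finally have "g \<in> FA.span (Pw d ` lists (Gs d))" using less.hyps gi by blast
    moreover have "fa_scale (f v) (Pw d vs) \<in> FA.span (Pw d ` lists (Gs d))"
      using vs(1) by (intro FA.span_scale FA.span_base) auto
    ultimately have "g + fa_scale (f v) (Pw d vs) \<in> FA.span (Pw d ` lists (Gs d))" by (rule FA.span_add)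
    then show ?thesis by (simp add: g_def)
  qed
qed

lemma exists_gen: assumes d: "0 < d"
  shows "free_homog_generators d (orb d ` Gs d :: (nat list \<Rightarrow> 'k::field) set)"
proof -
  let ?Z = "orb d ` Gs d :: (nat list \<Rightarrow> 'k) set"
  have lists_eq: "lists ?Z = map (orb d) ` lists (Gs d)" by (rule lists_image)
  have prod_eq: "fa_prod ` lists ?Z = (Pw d ` lists (Gs d) :: (nat list \<Rightarrow> 'k) set)"
    unfolding lists_eq Pw_def image_image by simp
  have 1: "?Z \<subseteq> invariants d" using orb_inv[OF d] by blast
  have 2: "\<forall>z\<in>?Z. \<exists>n\<ge>1. homogeneous n z \<and> z \<noteq> (\<lambda>_. 0)"
  proof
    fix z assume "z \<in> ?Z" then obtain v where v: "v \<in> Gs d" "z = orb d v" by blast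
    have "homogeneous (length v) z" using v orb_hom by simp
    moreover have "length v \<ge> 1" using G_props(3)[OF d v(1)] by (cases v) auto
    moreover have "z v = 1" using v G_props[OF d v(1)] by (simp add: orb_def)
    then have "z \<noteq> (\<lambda>_. 0)" by force
    ultimately show "\<exists>n\<ge>1. homogeneous n z \<and> z \<noteq> (\<lambda>_. 0)" by blast
  qed
  have 3: "inj_on fa_prod (lists ?Z)"
  proof (rule inj_onI)
    fix zs zs' assume zz: "zs \<in> lists ?Z" "zs' \<in> lists ?Z" "fa_prod zs = fa_prod zs'"
    obtain vs where vs: "vs \<in> lists (Gs d)" "zs = map (orb d) vs" using zz(1) lists_eq by auto
    obtain vs' where vs': "vs' \<in> lists (Gs d)" "zs' = map (orb d) vs'" using zz(2) lists_eq by auto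
    have "(Pw d vs :: nat list \<Rightarrow> 'k) = Pw d vs'" using zz(3) vs vs' by (simp add: Pw_def)
    moreover have inj: "inj_on (Pw d :: _ \<Rightarrow> _ \<Rightarrow> 'k) (lists (Gs d))" by (rule Pw_tri(1)[OF d])
    ultimately have "vs = vs'" using vs(1) vs'(1) by (meson inj_onD)
    then show "zs = zs'" using vs vs' by simp
  qed
  have 4: "\<not> FA.dependent (fa_prod ` lists ?Z)" using Pw_tri(2)[OF d] prod_eq by simp
  have 5: "FA.span (fa_prod ` lists ?Z) = invariants d"
  proof
    show "FA.span (fa_prod ` lists ?Z) \<subseteq> invariants d"
      by (rule FA.span_minimal[OF _ inv_subspace[OF d]]) (auto simp: prod_eq intro: Pw_inv[OF d])
    show "invariants d \<subseteq> FA.span (fa_prod ` lists ?Z)" using span_all[OF d] prod_eq by auto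
  qed
  show ?thesis unfolding free_homog_generators_def using 1 2 3 4 5 by blast
qed

definition proj :: "nat \<Rightarrow> (nat list \<Rightarrow> 'k::field) \<Rightarrow> (nat list \<Rightarrow> 'k)" where
  "proj n h = (\<lambda>w. if length w = n then h w else 0)"

lemma hom_unique: assumes "homogeneous m z" "homogeneous n z" "z \<noteq> (\<lambda>_. 0)" shows "m = n"
proof -
  obtain w where "z w \<noteq> 0" using assms(3) by auto
  then show ?thesis using assms(1,2) by (auto simp: homogeneous_def)
qed

lemma fa_prod_hom: "(\<forall>z\<in>set zs. homogeneous (dg z) z) \<Longrightarrow> homogeneous (sum_list (map dg zs)) (fa_prod zs)"
  by (induction zs) (auto simp: fa_prod_def hom_one hom_mult)

lemma proj_hom: "homogeneous n h \<Longrightarrow> proj n h = h"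
  by (auto simp: proj_def homogeneous_def fun_eq_iff)

lemma proj_hom0: "homogeneous m h \<Longrightarrow> m \<noteq> n \<Longrightarrow> proj n h = 0"
  by (auto simp: proj_def homogeneous_def fun_eq_iff)

lemma proj_sum: "proj n (\<Sum>a\<in>t. fa_scale (r a) a) = (\<Sum>a\<in>t. fa_scale (r a) (proj n a))"
  by (auto simp: proj_def fun_eq_iff fun_sum_apply fa_scale_def)

lemma geo: assumes "1 \<le> (d::nat)"
  shows "(\<Sum>j=1..k. (d - 1) ^ (j - 1) * d ^ (k - j)) + (d - 1) ^ k = d ^ k"
proof (induction k)
  case 0 then show ?case by simp
next
  case (Suc k)
  have "(\<Sum>j=1..Suc k. (d - 1) ^ (j - 1) * d ^ (Suc k - j))
      = (\<Sum>j=1..k. (d - 1) ^ (j - 1) * d ^ (Suc k - j)) + (d - 1) ^ k"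
    by (simp add: sum.cl_ivl_Suc)
  also have "(\<Sum>j=1..k. (d - 1) ^ (j - 1) * d ^ (Suc k - j)) = d * (\<Sum>j=1..k. (d - 1) ^ (j - 1) * d ^ (k - j))"
    unfolding sum_distrib_left by (rule sum.cong) (auto simp: Suc_diff_le)
  finally have e: "(\<Sum>j=1..Suc k. (d - 1) ^ (j - 1) * d ^ (Suc k - j))
      = d * (\<Sum>j=1..k. (d - 1) ^ (j - 1) * d ^ (k - j)) + (d - 1) ^ k" .
  have dd: "(d - 1) ^ k + (d - 1) ^ Suc k = d * (d - 1) ^ k"
  proof -
    have "(d - 1) ^ k + (d - 1) ^ Suc k = (1 + (d - 1)) * (d - 1) ^ k" by (simp add: algebra_simps)
    also have "1 + (d - 1) = d" using assms by simp
    finally show ?thesis .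
  qed
  show ?case unfolding e using Suc.IH dd by (metis add.assoc add_mult_distrib2 power_Suc)
qed

lemma count_gens:
  fixes Z :: "(nat list \<Rightarrow> 'k::field) set"
  assumes d: "0 < d" and Z: "free_homog_generators d Z"
  shows "\<forall>n\<ge>1. finite {z\<in>Z. homogeneous n z} \<and> card {z\<in>Z. homogeneous n z} = (d - 1) ^ (n - 1)"
proof -
  have Zinv: "Z \<subseteq> invariants d"
    and Zhom: "\<forall>z\<in>Z. \<exists>n\<ge>1. homogeneous n z \<and> z \<noteq> (\<lambda>_. 0)"
    and Zinj: "inj_on fa_prod (lists Z)"
    and Zind: "\<not> FA.dependent (fa_prod ` lists Z)"
    and Zspan: "FA.span (fa_prod ` lists Z) = invariants d"
    using Z unfolding free_homog_generators_def by blast+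
  define dg where "dg z = (SOME n. n \<ge> 1 \<and> homogeneous n z)" for z :: "nat list \<Rightarrow> 'k"
  have dg: "dg z \<ge> 1 \<and> homogeneous (dg z) z" if "z \<in> Z" for z
  proof -
    have "\<exists>n. n \<ge> 1 \<and> homogeneous n z" using Zhom that by blast
    then show ?thesis unfolding dg_def by (rule someI_ex)
  qed
  have dg_eq: "dg z = m" if "z \<in> Z" "homogeneous m z" for z m
    using hom_unique[of "dg z" z m] dg[OF that(1)] that Zhom by blast
  define L where "L m = {zs \<in> lists Z. sum_list (map dg zs) = m}" for m
  define Zn where "Zn m = {z\<in>Z. homogeneous m z}" for m
  have L0: "L 0 = {[]}"
  proof -
    have "zs = []" if "zs \<in> lists Z" "sum_list (map dg zs) = 0" for zs
    proof (cases zs)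
      case (Cons a l)
      then have "a \<in> Z" "dg a = 0" using that by auto
      then show ?thesis using dg by force
    qed simp
    then show ?thesis unfolding L_def by auto
  qed
  have prod_hom: "homogeneous (sum_list (map dg zs)) (fa_prod zs)" if "zs \<in> lists Z" for zs
    using that dg by (intro fa_prod_hom) auto
  have prod_inv: "fa_prod zs \<in> invariants d" if "zs \<in> lists Z" for zs
    using that FA.span_base[of "fa_prod zs" "fa_prod ` lists Z"] Zspan by auto
  have Lcard: "finite (L m) \<and> card (L m) = d ^ (m - 1)" if m: "m \<ge> 1" for m
  proof -
    define Pm where "Pm = fa_prod ` L m"
    have Pm_sub: "Pm \<subseteq> inv_component d m"
      unfolding Pm_def inv_component_def L_def using prod_inv prod_hom by auto
    have Pm_ind: "\<not> FA.dependent Pm"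
      using Zind by (rule FA.independent_mono) (auto simp: Pm_def L_def)
    have comp_Pm: "inv_component d m \<subseteq> FA.span Pm"
    proof
      fix f :: "nat list \<Rightarrow> 'k" assume f: "f \<in> inv_component d m"
      then have "f \<in> FA.span (fa_prod ` lists Z)" using Zspan by (simp add: inv_component_def)
      then obtain t r where t: "finite t" "t \<subseteq> fa_prod ` lists Z" "f = (\<Sum>a\<in>t. fa_scale (r a) a)"
        unfolding FA.span_explicit by blast
      have "f = proj m f" using f by (intro proj_hom[symmetric]) (simp add: inv_component_def)
      also have "\<dots> = proj m (\<Sum>a\<in>t. fa_scale (r a) a)" using t(3) by simp
      also have "\<dots> = (\<Sum>a\<in>t. fa_scale (r a) (proj m a))" by (rule proj_sum)
      finally have feq: "f = (\<Sum>a\<in>t. fa_scale (r a) (proj m a))" .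
      have inspan: "proj m a \<in> FA.span Pm" if a_t: "a \<in> t" for a
      proof -
        obtain zs where zs: "zs \<in> lists Z" "a = fa_prod zs" using t(2) a_t by blast
        show ?thesis
        proof (cases "sum_list (map dg zs) = m")
          case True
          then have "a \<in> Pm" using zs unfolding Pm_def L_def by auto
          moreover have "proj m a = a" using prod_hom[OF zs(1)] True zs(2) by (simp add: proj_hom)
          ultimately show ?thesis by (simp add: FA.span_base)
        next
          case False
          then have "proj m a = 0" using prod_hom[OF zs(1)] zs(2) by (simp add: proj_hom0)
          then show ?thesis by (simp add: FA.span_zero)
        qed
      qed
      have "(\<Sum>a\<in>t. fa_scale (r a) (proj m a)) \<in> FA.span Pm"
        by (intro FA.span_sum FA.span_scale inspan)
      then show "f \<in> FA.span Pm" using feq by simp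
    qed
    define B where "B = (orb d ` Rn d m :: (nat list \<Rightarrow> 'k) set)"
    have B_fin: "finite B" unfolding B_def using Rn_finite[OF d] by simp
    have "card B = card (Rn d m)" unfolding B_def by (rule card_image[OF orb_tri(1)[OF d]])
    then have B_card: "card B = d ^ (m - 1)" using Rn_card[OF d, of m] m by simp
    have B_ind: "\<not> FA.dependent B" unfolding B_def by (rule orb_tri(2)[OF d])
    have B_sub: "B \<subseteq> inv_component d m" unfolding B_def using orb_in_comp[OF d] by blast
    have comp_B: "inv_component d m \<subseteq> FA.span B" unfolding B_def by (rule comp_span[OF d])
    have 1: "finite Pm \<and> card Pm \<le> card B"
      using FA.independent_span_bound[OF B_fin Pm_ind] Pm_sub comp_B by blast
    have 2: "card B \<le> card Pm"
      using FA.independent_span_bound[OF _ B_ind] 1 B_sub comp_Pm by blast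
    have injL: "inj_on fa_prod (L m)" using Zinj by (rule inj_on_subset) (auto simp: L_def)
    have "finite (L m)" using 1 injL unfolding Pm_def using finite_image_iff by blast
    moreover have "card (L m) = card Pm" unfolding Pm_def using card_image[OF injL] by simp
    ultimately show ?thesis using 1 2 B_card by simp
  qed
  have Lfin: "finite (L m)" for m
    using Lcard[of m] L0 by (cases "m = 0") auto
  have Zn_fin: "finite (Zn m)" if "m \<ge> 1" for m
  proof -
    have "(\<lambda>z. [z]) ` Zn m \<subseteq> L m" unfolding Zn_def L_def using dg_eq by auto
    then have "finite ((\<lambda>z. [z]) ` Zn m)" using Lfin finite_subset by blast
    then show ?thesis by (rule finite_imageD) (simp add: inj_on_def)
  qed
  have Zn_dg: "z \<in> Zn j \<Longrightarrow> dg z = j" for z j unfolding Zn_def using dg_eq by blast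
  have rec: "card (L m) = (\<Sum>j=1..m. card (Zn j) * card (L (m - j)))" if m: "m \<ge> 1" for m
  proof -
    define Q where "Q = (\<Union>j\<in>{1..m}. Zn j \<times> L (m - j))"
    have "L m = (\<lambda>(z, zs). z # zs) ` Q"
    proof
      show "L m \<subseteq> (\<lambda>(z, zs). z # zs) ` Q"
      proof
        fix zs assume zs: "zs \<in> L m"
        then have "zs \<noteq> []" using m unfolding L_def by auto
        then obtain z zs' where e: "zs = z # zs'" by (cases zs) auto
        have z: "z \<in> Z" "zs' \<in> lists Z" "dg z + sum_list (map dg zs') = m" using zs e unfolding L_def by auto
        have "dg z \<in> {1..m}" using dg[OF z(1)] z(3) by auto
        moreover have "z \<in> Zn (dg z)" using dg[OF z(1)] z(1) unfolding Zn_def by auto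
        moreover have "zs' \<in> L (m - dg z)" using z unfolding L_def by auto
        ultimately have "(z, zs') \<in> Q" unfolding Q_def by blast
        then show "zs \<in> (\<lambda>(z, zs). z # zs) ` Q" using e by force
      qed
      show "(\<lambda>(z, zs). z # zs) ` Q \<subseteq> L m"
      proof
        fix x assume "x \<in> (\<lambda>(z, zs). z # zs) ` Q"
        then obtain j z zs where j: "j \<in> {1..m}" "z \<in> Zn j" "zs \<in> L (m - j)" "x = z # zs"
          unfolding Q_def by auto
        have "dg z = j" using Zn_dg[OF j(2)] .
        then show "x \<in> L m" using j unfolding L_def Zn_def by auto
      qed
    qed
    moreover have "inj_on (\<lambda>(z, zs). z # zs) Q" by (auto simp: inj_on_def)
    ultimately have "card (L m) = card Q" by (simp add: card_image)
    also have "card Q = (\<Sum>j=1..m. card (Zn j \<times> L (m - j)))"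
      unfolding Q_def
    proof (rule card_UN_disjoint)
      show "finite {1..m}" by simp
      show "\<forall>j\<in>{1..m}. finite (Zn j \<times> L (m - j))" using Zn_fin Lfin by auto
      show "\<forall>i\<in>{1..m}. \<forall>j\<in>{1..m}. i \<noteq> j \<longrightarrow> (Zn i \<times> L (m - i)) \<inter> (Zn j \<times> L (m - j)) = {}"
        using Zn_dg by blast
    qed
    also have "\<dots> = (\<Sum>j=1..m. card (Zn j) * card (L (m - j)))"
      by (simp add: card_cartesian_product)
    finally show ?thesis .
  qed
  have main: "card (Zn m) = (d - 1) ^ (m - 1)" if "m \<ge> 1" for m
    using that
  proof (induction m rule: less_induct)
    case (less m)
    then obtain k where k: "m = Suc k" by (cases m) auto
    have "d ^ k = (\<Sum>j=1..Suc k. card (Zn j) * card (L (Suc k - j)))"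
      using rec[of "Suc k"] Lcard[of "Suc k"] by simp
    also have "\<dots> = (\<Sum>j=1..k. card (Zn j) * card (L (Suc k - j))) + card (Zn (Suc k))"
      by (simp add: sum.cl_ivl_Suc L0)
    also have "(\<Sum>j=1..k. card (Zn j) * card (L (Suc k - j))) = (\<Sum>j=1..k. (d - 1) ^ (j - 1) * d ^ (k - j))"
    proof (rule sum.cong)
      fix j assume j: "j \<in> {1..k}"
      have "card (Zn j) = (d - 1) ^ (j - 1)" using less.IH[of j] j k by auto
      moreover have "card (L (Suc k - j)) = d ^ (k - j)" using Lcard[of "Suc k - j"] j by auto
      ultimately show "card (Zn j) * card (L (Suc k - j)) = (d - 1) ^ (j - 1) * d ^ (k - j)" by simp
    qed simp
    finally have "d ^ k = (\<Sum>j=1..k. (d - 1) ^ (j - 1) * d ^ (k - j)) + card (Zn (Suc k))" .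
    moreover have "(\<Sum>j=1..k. (d - 1) ^ (j - 1) * d ^ (k - j)) + (d - 1) ^ k = d ^ k"
      using geo[of d k] d by simp
    ultimately show ?case using k by simp
  qed
  show ?thesis using main Zn_fin unfolding Zn_def by blast
qed

theorem theorem3p1:
  fixes K :: "'k::field_char_0 itself" and d :: nat
  assumes "d \<ge> 2"
  shows "hilbert_series K d = (1 - of_nat (d - 1) * fps_X) / (1 - of_nat d * fps_X)
         \<and> (\<forall>n\<ge>1. inv_dim K d n = d ^ (n - 1))
         \<and> (\<exists>Z :: (nat list \<Rightarrow> 'k) set. free_homog_generators d Z)
         \<and> (\<forall>Z :: (nat list \<Rightarrow> 'k) set. free_homog_generators d Z \<longrightarrow>
              (\<forall>n\<ge>1. finite {z\<in>Z. homogeneous n z}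
                      \<and> card {z\<in>Z. homogeneous n z} = (d - 1) ^ (n - 1)))"
proof (intro conjI allI impI)
  have d: "0 < d" using assms by simp
  show "hilbert_series K d = (1 - of_nat (d - 1) * fps_X) / (1 - of_nat d * fps_X)"
    by (rule hilbert_eq[OF d])
  show "inv_dim K d n = d ^ (n - 1)" if "n \<ge> 1" for n
    using inv_dim_eq[OF d, of K n] that by simp
  show "\<exists>Z :: (nat list \<Rightarrow> 'k) set. free_homog_generators d Z"
    using exists_gen[OF d] by blast
  fix Z :: "(nat list \<Rightarrow> 'k) set" and n :: nat
  assume Z: "free_homog_generators d Z" and n: "1 \<le> n"
  show "finite {z\<in>Z. homogeneous n z}" "card {z\<in>Z. homogeneous n z} = (d - 1) ^ (n - 1)"
    using count_gens[OF d Z] n by blast+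
qed

end
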